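(* Let $G=(V,E)$ be a finite graph with at least one vertex and $k>0$ an integer, and let $\mathcal F_k$ be the set of all stars $\sigma=\{(A_i,B_i):i=0,\dots,n\}\subseteq\vec S_k$ with $\bigl|\bigcap_{i=0}^nB_i\bigr|<k$. Then $\mathcal F_k$ is closed under shifting: whenever $\vec s_0\in\vec S_k$ is linked to some $\vec r\le\vec s_0$ in $\vec S_k$ that is not forced by $\mathcal F_k$, then $\vec s_0$ is $\mathcal F_k$-linked to $\vec r$.
   Context: An oriented vertex separation of $G$ is an ordered pair $(A,B)$ with $A\cup B=V$ and no edge between $A\setminus B$ and $B\setminus A$. They form a universe $\vec U$ with $(A,B)\le(C,D)$ iff $A\subseteq C$, $B\supseteq D$; $(A,B)^*=(B,A)$; $(A,B)\vee(C,D)=(A\cup C,B\cap D)$; $(A,B)\wedge(C,D)=(A\cap C,B\cup D)$. $\vec S_k=\{(A,B)\in\vec U:|A\cap B|<k\}$ and $S_k$ is its set of separations $s=\{\vec s,\vec s^{\,*}\}$; write $\overleftarrow s=\vec s^{\,*}$; $s$ is degenerate if $\vec s=\overleftarrow s$; $\vec r$ is trivial if some $s\in S_k$ has $\vec r<\vec s$ and $\vec r<\overleftarrow s$. A star is a nonempty set $\sigma$ with $\vec r\le\overleftarrow s$ for all distinct $\vec r,\vec s\in\sigma$. $\mathcal F$ forces $\vec r$ if $\{\overleftarrow r\}\in\mathcal F$ or $r$ is degenerate (elements not forced by $\mathcal F_k$ are nontrivial and nondegenerate). For nontrivial nondegenerate $\vec r$, $\vec S_{\ge\vec r}$ is the set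 of all orientations of separations in $S_k$ having an orientation $\ge\vec r$; for $\vec s_0\ge\vec r$ the shifting map $f:\vec S_{\ge\vec r}\to\vec U$ is $f(\vec s)=\vec s\vee\vec s_0$, $f(\overleftarrow s)=(\vec s\vee\vec s_0)^*$ for all $\vec s\in\vec S_{\ge\vec r}\setminus\{\overleftarrow r\}$ with $\vec s\ge\vec r$. $\vec s_0$ is linked to $\vec r$ if $\vec s_0\ge\vec r$ and $\vec s\vee\vec s_0\in\vec S_k$ for all $\vec s\in\vec S_k$ with $\vec s\ge\vec r$, $\vec s\ne\overleftarrow r$; it is $\mathcal F$-linked to $\vec r$ if moreover $f(\sigma)\in\mathcal F$ for every star $\sigma\in\mathcal F$ with $\sigma\subseteq\vec S_{\ge\vec r}\setminus\{\overleftarrow r\}$ having an element $\ge\vec r$. *)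

theory Defs
  imports Main
begin

type_synonym 'a osep = "'a set \<times> 'a set"

definition finite_graph :: "'a set \<Rightarrow> 'a set set \<Rightarrow> bool" where
  "finite_graph V E \<longleftrightarrow> finite V \<and> (\<forall>e\<in>E. e \<subseteq> V \<and> card e = 2)"

definition is_osep :: "'a set \<Rightarrow> 'a set set \<Rightarrow> 'a osep \<Rightarrow> bool" where
  "is_osep V E s \<longleftrightarrow> fst s \<union> snd s = V \<and>
     \<not> (\<exists>e\<in>E. e \<inter> (fst s - snd s) \<noteq> {} \<and> e \<inter> (snd s - fst s) \<noteq> {})"

definition sep_le :: "'a osep \<Rightarrow> 'a osep \<Rightarrow> bool" where
  "sep_le s t \<longleftrightarrow> fst s \<subseteq> fst t \<and> snd t \<subseteq> snd s"

definition sep_less :: "'a osep \<Rightarrow> 'a osep \<Rightarrow> bool" where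
  "sep_less s t \<longleftrightarrow> sep_le s t \<and> s \<noteq> t"

definition inv_sep :: "'a osep \<Rightarrow> 'a osep" where
  "inv_sep s = (snd s, fst s)"

definition sep_join :: "'a osep \<Rightarrow> 'a osep \<Rightarrow> 'a osep" where
  "sep_join s t = (fst s \<union> fst t, snd s \<inter> snd t)"

definition sep_meet :: "'a osep \<Rightarrow> 'a osep \<Rightarrow> 'a osep" where
  "sep_meet s t = (fst s \<inter> fst t, snd s \<union> snd t)"

definition Sk :: "'a set \<Rightarrow> 'a set set \<Rightarrow> nat \<Rightarrow> 'a osep set" where
  "Sk V E k = {s. is_osep V E s \<and> card (fst s \<inter> snd s) < k}"

definition degenerate :: "'a osep \<Rightarrow> bool" where
  "degenerate s \<longleftrightarrow> s = inv_sep s"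

definition trivial_in :: "'a osep set \<Rightarrow> 'a osep \<Rightarrow> bool" where
  "trivial_in S r \<longleftrightarrow> (\<exists>s\<in>S. sep_less r s \<and> sep_less r (inv_sep s))"

definition is_star :: "'a osep set \<Rightarrow> bool" where
  "is_star \<sigma> \<longleftrightarrow> \<sigma> \<noteq> {} \<and> (\<forall>r\<in>\<sigma>. \<forall>s\<in>\<sigma>. r \<noteq> s \<longrightarrow> sep_le r (inv_sep s))"

definition Fk :: "'a set \<Rightarrow> 'a set set \<Rightarrow> nat \<Rightarrow> 'a osep set set" where
  "Fk V E k = {\<sigma>. is_star \<sigma> \<and> \<sigma> \<subseteq> Sk V E k \<and> card (\<Inter> (snd ` \<sigma>)) < k}"

definition forces :: "'a osep set set \<Rightarrow> 'a osep \<Rightarrow> bool" where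
  "forces F r \<longleftrightarrow> {inv_sep r} \<in> F \<or> degenerate r"

definition S_ge :: "'a osep set \<Rightarrow> 'a osep \<Rightarrow> 'a osep set" where
  "S_ge S r = {s\<in>S. sep_le r s \<or> sep_le r (inv_sep s)}"

definition shift :: "'a osep \<Rightarrow> 'a osep \<Rightarrow> 'a osep \<Rightarrow> 'a osep" where
  "shift r s0 s = (if sep_le r s \<and> s \<noteq> inv_sep r then sep_join s s0
                   else inv_sep (sep_join (inv_sep s) s0))"

definition linked :: "'a osep set \<Rightarrow> 'a osep \<Rightarrow> 'a osep \<Rightarrow> bool" where
  "linked S s0 r \<longleftrightarrow> sep_le r s0 \<and>
     (\<forall>s\<in>S. sep_le r s \<and> s \<noteq> inv_sep r \<longrightarrow> sep_join s s0 \<in> S)"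

definition F_linked :: "'a osep set set \<Rightarrow> 'a osep set \<Rightarrow> 'a osep \<Rightarrow> 'a osep \<Rightarrow> bool" where
  "F_linked F S s0 r \<longleftrightarrow> linked S s0 r \<and>
     (\<forall>\<sigma>\<in>F. is_star \<sigma> \<and> \<sigma> \<subseteq> S_ge S r - {inv_sep r} \<and> (\<exists>s\<in>\<sigma>. sep_le r s)
          \<longrightarrow> shift r s0 ` \<sigma> \<in> F)"

end

theory Submission
  imports Defs
begin

lemma Sk_inv: "s \<in> Sk V E k \<Longrightarrow> inv_sep s \<in> Sk V E k"
  unfolding Sk_def is_osep_def inv_sep_def by (auto simp: Int_commute Un_commute)

lemma Sk_sub: "s \<in> Sk V E k \<Longrightarrow> fst s \<subseteq> V \<and> snd s \<subseteq> V"
  unfolding Sk_def is_osep_def by auto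

lemma noboth:
  assumes "finite V" "s \<in> Sk V E k" "sep_le r s" "sep_le r (inv_sep s)"
  shows "card (fst r) < k"
proof -
  have sub: "fst r \<subseteq> fst s \<inter> snd s" using assms(3,4) unfolding sep_le_def inv_sep_def by auto
  have "finite (fst s \<inter> snd s)" using Sk_sub[OF assms(2)] assms(1) by (meson finite_Int finite_subset)
  then have "card (fst r) \<le> card (fst s \<inter> snd s)" using sub card_mono by blast
  moreover have "card (fst s \<inter> snd s) < k" using assms(2) unfolding Sk_def by auto
  ultimately show ?thesis by simp
qed

lemma sep_le_trans: "sep_le a b \<Longrightarrow> sep_le b c \<Longrightarrow> sep_le a c"
  unfolding sep_le_def by auto

lemma sep_le_inv: "sep_le a (inv_sep b) \<Longrightarrow> sep_le b (inv_sep a)"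
  unfolding sep_le_def inv_sep_def by auto

theorem lemma5p6:
  fixes V :: "'a set" and E :: "'a set set" and k :: nat
  assumes "finite_graph V E" and "V \<noteq> {}" and "k > 0"
  shows "\<forall>s0\<in>Sk V E k. \<forall>r\<in>Sk V E k.
           sep_le r s0 \<and> \<not> forces (Fk V E k) r \<and> linked (Sk V E k) s0 r
           \<longrightarrow> F_linked (Fk V E k) (Sk V E k) s0 r"
proof (intro ballI impI)
  fix s0 r
  assume s0S: "s0 \<in> Sk V E k" and rS: "r \<in> Sk V E k"
    and H: "sep_le r s0 \<and> \<not> forces (Fk V E k) r \<and> linked (Sk V E k) s0 r"
  have finV: "finite V" using assms(1) unfolding finite_graph_def by auto
  have lk: "linked (Sk V E k) s0 r" using H by blast
  have nf: "\<not> forces (Fk V E k) r" using H by blast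
  have rk: "\<not> card (fst r) < k"
  proof
    assume c: "card (fst r) < k"
    have "{inv_sep r} \<in> Fk V E k"
      unfolding Fk_def is_star_def using Sk_inv[OF rS] c by (auto simp: inv_sep_def)
    then show False using nf unfolding forces_def by blast
  qed
  have nb: "\<And>s. s \<in> Sk V E k \<Longrightarrow> sep_le r s \<Longrightarrow> sep_le r (inv_sep s) \<Longrightarrow> False"
    using noboth[OF finV] rk by blast
  have lk2: "\<And>s. s \<in> Sk V E k \<Longrightarrow> sep_le r s \<Longrightarrow> s \<noteq> inv_sep r \<Longrightarrow> sep_join s s0 \<in> Sk V E k"
    using lk unfolding linked_def by blast
  show "F_linked (Fk V E k) (Sk V E k) s0 r"
    unfolding F_linked_def
  proof (intro conjI lk ballI impI)
    fix \<sigma> assume \<sigma>F: "\<sigma> \<in> Fk V E k"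
      and hs: "is_star \<sigma> \<and> \<sigma> \<subseteq> S_ge (Sk V E k) r - {inv_sep r} \<and> (\<exists>s\<in>\<sigma>. sep_le r s)"
    obtain s1 where s1: "s1 \<in> \<sigma>" "sep_le r s1" using hs by blast
    have star: "\<And>a b. a \<in> \<sigma> \<Longrightarrow> b \<in> \<sigma> \<Longrightarrow> a \<noteq> b \<Longrightarrow> sep_le a (inv_sep b)"
      using hs unfolding is_star_def by blast
    have \<sigma>S: "\<sigma> \<subseteq> Sk V E k" using \<sigma>F unfolding Fk_def by blast
    have \<sigma>ge: "\<And>a. a \<in> \<sigma> \<Longrightarrow> sep_le r a \<or> sep_le r (inv_sep a)"
      using hs unfolding S_ge_def by blast
    have \<sigma>nr: "\<And>a. a \<in> \<sigma> \<Longrightarrow> a \<noteq> inv_sep r" using hs by blast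
    have other: "\<And>t. t \<in> \<sigma> \<Longrightarrow> t \<noteq> s1 \<Longrightarrow> \<not> sep_le r t"
    proof
      fix t assume t: "t \<in> \<sigma>" "t \<noteq> s1" "sep_le r t"
      have "sep_le t (inv_sep s1)" using star t s1 by blast
      then have "sep_le r (inv_sep s1)" using t(3) sep_le_trans by blast
      then show False using nb s1 \<sigma>S by blast
    qed
    obtain A0 B0 where s0e: "s0 = (A0, B0)" by (cases s0)
    obtain C1 D1 where s1e: "s1 = (C1, D1)" by (cases s1)
    have sh1: "shift r s0 s1 = (C1 \<union> A0, D1 \<inter> B0)"
      using s1 \<sigma>nr unfolding shift_def by (simp add: s0e s1e sep_join_def)
    have sht: "\<And>t. t \<in> \<sigma> \<Longrightarrow> t \<noteq> s1 \<Longrightarrow> shift r s0 t = (fst t \<inter> B0, snd t \<union> A0)"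
      using other unfolding shift_def by (simp add: s0e sep_join_def inv_sep_def)
    have st1: "\<And>t. t \<in> \<sigma> \<Longrightarrow> t \<noteq> s1 \<Longrightarrow> C1 \<subseteq> snd t \<and> fst t \<subseteq> D1"
      using star s1 unfolding sep_le_def inv_sep_def by (fastforce simp: s1e)
    have st2: "\<And>a b. a \<in> \<sigma> \<Longrightarrow> b \<in> \<sigma> \<Longrightarrow> a \<noteq> b \<Longrightarrow> fst a \<subseteq> snd b \<and> fst b \<subseteq> snd a"
      using star unfolding sep_le_def inv_sep_def by fastforce
    have isst: "is_star (shift r s0 ` \<sigma>)"
      unfolding is_star_def
    proof (intro conjI ballI impI)
      show "shift r s0 ` \<sigma> \<noteq> {}" using s1 by blast
    next
      fix x y assume x: "x \<in> shift r s0 ` \<sigma>" and y: "y \<in> shift r s0 ` \<sigma>" and xy: "x \<noteq> y"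
      obtain a where a: "a \<in> \<sigma>" "x = shift r s0 a" using x by blast
      obtain b where b: "b \<in> \<sigma>" "y = shift r s0 b" using y by blast
      have ab: "a \<noteq> b" using xy a b by blast
      show "sep_le x (inv_sep y)"
      proof (cases "a = s1")
        case True
        then have "b \<noteq> s1" using ab by blast
        then show ?thesis using True a b sh1 sht st1[OF b(1)]
          by (auto simp: sep_le_def inv_sep_def)
      next
        case False
        note aF = False
        show ?thesis
        proof (cases "b = s1")
          case True
          then show ?thesis using aF a b sh1 sht st1[OF a(1)]
            by (auto simp: sep_le_def inv_sep_def)
        next
          case False
          then show ?thesis using aF a b sht st2[OF a(1) b(1) ab]
            by (auto simp: sep_le_def inv_sep_def)
        qed
      qed
    qed
    have issub: "shift r s0 ` \<sigma> \<subseteq> Sk V E k"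
    proof
      fix x assume "x \<in> shift r s0 ` \<sigma>"
      then obtain a where a: "a \<in> \<sigma>" "x = shift r s0 a" by blast
      show "x \<in> Sk V E k"
      proof (cases "a = s1")
        case True
        have "sep_join s1 s0 \<in> Sk V E k" using lk2 s1 \<sigma>S \<sigma>nr by blast
        then show ?thesis using True a sh1 by (simp add: s0e s1e sep_join_def)
      next
        case False
        have nra: "\<not> sep_le r a" using other a False by blast
        then have rle: "sep_le r (inv_sep a)" using \<sigma>ge a by blast
        have "inv_sep a \<noteq> inv_sep r"
        proof
          assume "inv_sep a = inv_sep r"
          then have "a = r" unfolding inv_sep_def by (cases a, cases r) auto
          then show False using nra unfolding sep_le_def by simp
        qed
        then have "sep_join (inv_sep a) s0 \<in> Sk V E k"
          using lk2 Sk_inv \<sigma>S a rle by blast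
        then have "inv_sep (sep_join (inv_sep a) s0) \<in> Sk V E k" by (rule Sk_inv)
        then show ?thesis using a nra unfolding shift_def by simp
      qed
    qed
    define X where "X = \<Inter> (snd ` \<sigma>)"
    have Xk: "card X < k" using \<sigma>F unfolding Fk_def X_def by blast
    have XD1: "X \<subseteq> D1" unfolding X_def using s1 s1e by force
    have C1D1X: "C1 \<inter> D1 \<subseteq> X"
    proof
      fix v assume v: "v \<in> C1 \<inter> D1"
      show "v \<in> X" unfolding X_def
      proof (rule InterI)
        fix B assume "B \<in> snd ` \<sigma>"
        then obtain b where b: "b \<in> \<sigma>" "B = snd b" by blast
        show "v \<in> B"
        proof (cases "b = s1")
          case True then show ?thesis using b v s1e by simp
        next
          case False then show ?thesis using st1[OF b(1)] b v by blast
        qed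
      qed
    qed
    define q where "q = (C1 \<union> X, D1)"
    have s1S: "s1 \<in> Sk V E k" using s1 \<sigma>S by blast
    have qS: "q \<in> Sk V E k"
    proof -
      have os: "is_osep V E s1" using s1S unfolding Sk_def by blast
      have "C1 \<union> D1 = V" using os s1e unfolding is_osep_def by simp
      then have u: "fst q \<union> snd q = V" using XD1 unfolding q_def by auto
      have "\<not> (\<exists>e\<in>E. e \<inter> (C1 - D1) \<noteq> {} \<and> e \<inter> (D1 - C1) \<noteq> {})"
        using os s1e unfolding is_osep_def by simp
      moreover have "fst q - snd q = C1 - D1" using XD1 unfolding q_def by auto
      moreover have "snd q - fst q \<subseteq> D1 - C1" unfolding q_def by auto
      ultimately have "\<not> (\<exists>e\<in>E. e \<inter> (fst q - snd q) \<noteq> {} \<and> e \<inter> (snd q - fst q) \<noteq> {})"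
        by blast
      moreover have "fst q \<inter> snd q = X" using XD1 C1D1X unfolding q_def by auto
      ultimately show ?thesis using u Xk unfolding Sk_def is_osep_def by simp
    qed
    have rq: "sep_le r q" using s1(2) unfolding q_def sep_le_def s1e by auto
    have qnr: "q \<noteq> inv_sep r"
    proof
      assume "q = inv_sep r"
      then have "sep_le r (inv_sep q)" using rq unfolding sep_le_def inv_sep_def
        by (cases r) auto
      then show False using nb qS rq by blast
    qed
    have qj: "sep_join q s0 \<in> Sk V E k" using lk2 qS rq qnr by blast
    let ?W = "(C1 \<union> X \<union> A0) \<inter> (D1 \<inter> B0)"
    have Wk: "card ?W < k" using qj unfolding Sk_def q_def s0e sep_join_def
      by (simp add: Un_assoc)
    have finW: "finite ?W" 
    proof -
      have "B0 \<subseteq> V" using Sk_sub[OF s0S] s0e by simp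
      then have "finite B0" using finV finite_subset by blast
      then show ?thesis by blast
    qed
    have YW: "\<Inter> (snd ` shift r s0 ` \<sigma>) \<subseteq> ?W"
    proof
      fix y assume y: "y \<in> \<Inter> (snd ` shift r s0 ` \<sigma>)"
      have y1: "y \<in> D1 \<inter> B0" using y s1 sh1 by force
      have "y \<in> A0 \<or> y \<in> X"
      proof (cases "y \<in> A0")
        case False
        have "y \<in> X" unfolding X_def
        proof (rule InterI)
          fix B assume "B \<in> snd ` \<sigma>"
          then obtain b where b: "b \<in> \<sigma>" "B = snd b" by blast
          show "y \<in> B"
          proof (cases "b = s1")
            case True then show ?thesis using b y1 s1e by simp
          next
            case False
            have "y \<in> snd (shift r s0 b)" using y b by blast
            then show ?thesis using sht[OF b(1) False] \<open>y \<notin> A0\<close> b by simp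
          qed
        qed
        then show ?thesis by blast
      qed simp
      then show "y \<in> ?W" using y1 by blast
    qed
    have "card (\<Inter> (snd ` shift r s0 ` \<sigma>)) < k"
      using card_mono[OF finW YW] Wk by simp
    then show "shift r s0 ` \<sigma> \<in> Fk V E k"
      unfolding Fk_def using isst issub by blast
  qed
qed

end
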